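(* In the one-shot wage theft problem described in the context, fix an effort level $a\in[0,1)$ and let $(w_H^*,w_L^* )$ be the promised wages of an optimal solution of the problem restricted to effort level $a$. Then, with these wages and effort fixed, choosing thefts $b_i^*=\min\{\beta,w_i^*\}$ for $i\in\{H,L\}$ maximizes the employer's profit over all $b_H,b_L$ with $0\le b_i\le w_i^*$. Furthermore, if $a\in(0,1)$, then $b_i^*=\min\{\beta,w_i^*\}$, $i\in\{H,L\}$, is the unique optimal wage theft.
   Context: Fix $P>0$, $y_H>y_L\ge 0$, a real number $u$ (reservation utility) and $\gamma\in(0,1]$ (inspection probability). Let $C:[0,1)\to\mathbb{R}$ be the worker's effort cost: $C(0)=0$, $C$ increasing, strictly convex, twice differentiable, $C(a)\to\infty$ as $a\to1$. Let $\eta:[0,\infty)\to\mathbb{R}$ be the penalty: strictly convex, increasing, twice differentiable, $\eta(0)=0$. The one-shot wage theft problem is: choose $a,w_H,w_L,b_H,b_L$ to maximize the employer profit $a\,(Py_H-w_H+b_H-\gamma\eta(b_H))+(1-a)\,(Py_L-w_L+b_L-\gamma\eta(b_L))$ subject to (incentive compatibility) $a\in\arg\max_{a'\in[0,1)}\{a'w_H+(1-a')w_L-C(a')\}$; (individual rationality) $a w_H+(1-a)w_L-C(a)\ge u$; $w_H,w_L\ge 0$; $0\le b_L\le w_L$, $0\le b_H\le w_H$; $a\in[0,1)$. The problem restricted to effort level $a$ is the same problem with $a$ fixed. The principal's ideal wage theft $\beta\ge 0$ is the value with $\gamma\eta'(\beta)=1$ (assumed to exist). *)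

theory Defs
  imports "HOL-Analysis.Analysis"
begin

definition strictly_convex_on :: "real set \<Rightarrow> (real \<Rightarrow> real) \<Rightarrow> bool" where
  "strictly_convex_on S f \<longleftrightarrow> convex S \<and>
     (\<forall>x\<in>S. \<forall>y\<in>S. \<forall>t. x \<noteq> y \<and> 0 < t \<and> t < 1 \<longrightarrow>
        f ((1 - t) * x + t * y) < (1 - t) * f x + t * f y)"

definition profit ::
  "real \<Rightarrow> real \<Rightarrow> real \<Rightarrow> real \<Rightarrow> (real \<Rightarrow> real) \<Rightarrow>
   real \<Rightarrow> real \<Rightarrow> real \<Rightarrow> real \<Rightarrow> real \<Rightarrow> real" where
  "profit P yH yL \<gamma> \<eta> a wH wL bH bL =
     a * (P * yH - wH + bH - \<gamma> * \<eta> bH) + (1 - a) * (P * yL - wL + bL - \<gamma> * \<eta> bL)"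

text \<open>Feasibility for the problem restricted to effort level a
  (incentive compatibility, individual rationality, wage and theft bounds).\<close>
definition feasible_at ::
  "(real \<Rightarrow> real) \<Rightarrow> real \<Rightarrow> real \<Rightarrow> real \<Rightarrow> real \<Rightarrow> real \<Rightarrow> real \<Rightarrow> bool" where
  "feasible_at C u a wH wL bH bL \<longleftrightarrow>
     a \<in> {0..<1} \<and>
     (\<forall>a'\<in>{0..<1}. a' * wH + (1 - a') * wL - C a' \<le> a * wH + (1 - a) * wL - C a) \<and>
     a * wH + (1 - a) * wL - C a \<ge> u \<and>
     wH \<ge> 0 \<and> wL \<ge> 0 \<and> 0 \<le> bL \<and> bL \<le> wL \<and> 0 \<le> bH \<and> bH \<le> wH"

definition optimal_at ::
  "real \<Rightarrow> real \<Rightarrow> real \<Rightarrow> real \<Rightarrow> (real \<Rightarrow> real) \<Rightarrow> (real \<Rightarrow> real) \<Rightarrow> real \<Rightarrow>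
   real \<Rightarrow> real \<Rightarrow> real \<Rightarrow> real \<Rightarrow> real \<Rightarrow> bool" where
  "optimal_at P yH yL \<gamma> \<eta> C u a wH wL bH bL \<longleftrightarrow>
     feasible_at C u a wH wL bH bL \<and>
     (\<forall>wH' wL' bH' bL'. feasible_at C u a wH' wL' bH' bL' \<longrightarrow>
        profit P yH yL \<gamma> \<eta> a wH' wL' bH' bL' \<le> profit P yH yL \<gamma> \<eta> a wH wL bH bL)"

end

theory Submission imports Defs begin

lemma tangent_le:
  fixes \<eta> \<eta>' :: "real \<Rightarrow> real"
  assumes conv: "strictly_convex_on {0..} \<eta>"
    and d: "(\<eta> has_real_derivative D) (at b within {0..})"
    and b: "b \<ge> 0" and x: "x \<ge> 0"
  shows "D * (x - b) \<le> \<eta> x - \<eta> b"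
proof (cases "x = b")
  case True then show ?thesis by simp
next
  case False
  define y where "y n = b + (x - b) / (real n + 2)" for n :: nat
  have gen: "b + (x - b) / c = (1 - 1/c) * b + (1/c) * x" if "c \<noteq> 0" for c :: real
    using that by (simp add: field_simps)
  have t: "0 < 1 / (real n + 2)" "1 / (real n + 2) < 1" for n :: nat by auto
  have yin: "y n \<in> {0..} - {b}" for n
  proof -
    have "y n = (1 - 1/(real n+2)) * b + (1/(real n+2)) * x"
      unfolding y_def by (rule gen) simp
    moreover have "0 \<le> (1 - 1/(real n+2)) * b + (1/(real n+2)) * x"
      using t[of n] b x by (intro add_nonneg_nonneg mult_nonneg_nonneg) auto
    moreover have "y n \<noteq> b" unfolding y_def using False by auto
    ultimately show ?thesis by auto
  qed
  have "(\<lambda>n. (x - b) / (real n + 2)) \<longlonglongrightarrow> 0"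
  proof -
    have "filterlim (\<lambda>n. real n + 2) at_top sequentially"
      using filterlim_tendsto_add_at_top[OF tendsto_const[of 2] filterlim_real_sequentially]
      by (simp add: add.commute)
    then show ?thesis
      by (intro tendsto_divide_0[OF tendsto_const] filterlim_at_top_imp_at_infinity)
  qed
  then have "y \<longlonglongrightarrow> b" unfolding y_def using tendsto_add[OF tendsto_const[of b]] by fastforce
  then have fy: "filterlim y (at b within {0..}) sequentially"
    using yin by (auto simp: filterlim_at)
  have q: "((\<lambda>z. (\<eta> z - \<eta> b) / (z - b)) \<longlongrightarrow> D) (at b within {0..})"
    using d by (simp add: has_field_derivative_iff)
  have lim: "(\<lambda>n. (\<eta> (y n) - \<eta> b) / (y n - b)) \<longlonglongrightarrow> D"
    by (rule filterlim_compose[OF q fy])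
  then have lim2: "(\<lambda>n. (x - b) * ((\<eta> (y n) - \<eta> b) / (y n - b))) \<longlonglongrightarrow> (x - b) * D"
    by (intro tendsto_mult tendsto_const)
  have bound: "(x - b) * ((\<eta> (y n) - \<eta> b) / (y n - b)) \<le> \<eta> x - \<eta> b" for n
  proof -
    define t where "t = 1 / (real n + 2)"
    have tt: "0 < t" "t < 1" using t[of n] by (auto simp: t_def)
    have yn: "y n = (1 - t) * b + t * x" unfolding y_def t_def by (rule gen) simp
    have "\<eta> (y n) < (1 - t) * \<eta> b + t * \<eta> x"
      using conv tt b x False unfolding strictly_convex_on_def yn by auto
    moreover have "y n - b = t * (x - b)" using yn by (simp add: algebra_simps)
    moreover have "x - b \<noteq> 0" using False by simp
    ultimately have e: "(x - b) * ((\<eta> (y n) - \<eta> b) / (y n - b)) = (\<eta> (y n) - \<eta> b) / t"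
      by simp
    have "\<eta> (y n) - \<eta> b < t * (\<eta> x - \<eta> b)" using \<open>\<eta> (y n) < _\<close> by (simp add: algebra_simps)
    then have "(\<eta> (y n) - \<eta> b) / t < \<eta> x - \<eta> b" using tt by (simp add: pos_divide_less_eq mult.commute)
    then show ?thesis using e by simp
  qed
  show ?thesis using LIMSEQ_le_const2[OF lim2] bound by (simp add: mult.commute)
qed

lemma tangent_less:
  fixes \<eta> :: "real \<Rightarrow> real"
  assumes conv: "strictly_convex_on {0..} \<eta>"
    and d: "(\<eta> has_real_derivative D) (at b within {0..})"
    and b: "b \<ge> 0" and x: "x \<ge> 0" and ne: "x \<noteq> b"
  shows "D * (x - b) < \<eta> x - \<eta> b"
proof -
  define z where "z = (1 - 1/2) * b + (1/2) * x"
  have z0: "z \<ge> 0" using b x by (simp add: z_def)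
  have "D * (z - b) \<le> \<eta> z - \<eta> b" by (rule tangent_le[OF conv d b z0])
  moreover have "\<eta> z < (1 - 1/2) * \<eta> b + (1/2) * \<eta> x"
    using conv b x ne unfolding strictly_convex_on_def z_def by (metis atLeast_iff field_sum_of_halves less_add_same_cancel2 zero_less_divide_1_iff zero_less_numeral)
  moreover have "z - b = (x - b) / 2" by (simp add: z_def field_simps)
  ultimately show ?thesis by (simp add: field_simps)
qed

lemma gmax:
  fixes \<eta> \<eta>' :: "real \<Rightarrow> real"
  assumes conv: "strictly_convex_on {0..} \<eta>"
    and d: "\<And>x. x \<ge> 0 \<Longrightarrow> (\<eta> has_real_derivative \<eta>' x) (at x within {0..})"
    and \<gamma>: "\<gamma> > 0" and \<beta>: "\<beta> \<ge> 0" "\<gamma> * \<eta>' \<beta> = 1"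
    and x: "x \<ge> 0" "x \<noteq> \<beta>"
  shows "x - \<gamma> * \<eta> x < \<beta> - \<gamma> * \<eta> \<beta>"
proof -
  have "\<eta>' \<beta> * (x - \<beta>) < \<eta> x - \<eta> \<beta>"
    by (rule tangent_less[OF conv d[OF \<beta>(1)] \<beta>(1) x])
  then have "\<gamma> * (\<eta>' \<beta> * (x - \<beta>)) < \<gamma> * (\<eta> x - \<eta> \<beta>)" using \<gamma> by simp
  moreover have "\<gamma> * (\<eta>' \<beta> * (x - \<beta>)) = x - \<beta>"
    by (metis \<beta>(2) mult.assoc mult_1)
  ultimately have "x - \<beta> < \<gamma> * \<eta> x - \<gamma> * \<eta> \<beta>" by (simp add: algebra_simps)
  then show ?thesis by simp
qed

lemma gmin:
  fixes \<eta> \<eta>' :: "real \<Rightarrow> real"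
  assumes conv: "strictly_convex_on {0..} \<eta>"
    and d: "\<And>x. x \<ge> 0 \<Longrightarrow> (\<eta> has_real_derivative \<eta>' x) (at x within {0..})"
    and \<gamma>: "\<gamma> > 0" and \<beta>: "\<beta> \<ge> 0" "\<gamma> * \<eta>' \<beta> = 1"
    and c: "0 \<le> c" "c \<le> w" "c \<noteq> min \<beta> w"
  shows "c - \<gamma> * \<eta> c < min \<beta> w - \<gamma> * \<eta> (min \<beta> w)"
proof (cases "\<beta> \<le> w")
  case True
  then show ?thesis using gmax[OF conv d \<gamma> \<beta>, of c] c by simp
next
  case False
  then have m: "min \<beta> w = w" and cw: "c < w" "w < \<beta>" using c by auto
  define t where "t = (w - c) / (\<beta> - c)"
  have tt: "0 < t" "t < 1" using cw by (auto simp: t_def)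
  have "t * (\<beta> - c) = w - c" using cw by (simp add: t_def)
  then have wt: "w = (1 - t) * c + t * \<beta>" by (simp add: algebra_simps)
  have "\<eta> w < (1 - t) * \<eta> c + t * \<eta> \<beta>"
    using conv tt c \<beta> cw unfolding strictly_convex_on_def wt by auto
  moreover have "c - \<gamma> * \<eta> c < \<beta> - \<gamma> * \<eta> \<beta>" using gmax[OF conv d \<gamma> \<beta>, of c] c cw by simp
  ultimately have "c - \<gamma> * \<eta> c < (1 - t) * (c - \<gamma> * \<eta> c) + t * (\<beta> - \<gamma> * \<eta> \<beta>)"
  proof -
    have "t * (c - \<gamma> * \<eta> c) < t * (\<beta> - \<gamma> * \<eta> \<beta>)"
      using \<open>c - \<gamma> * \<eta> c < _\<close> tt by (intro mult_strict_left_mono) auto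
    then show ?thesis by (simp add: algebra_simps)
  qed
  also have "\<dots> \<le> w - \<gamma> * \<eta> w"
  proof -
    have "\<gamma> * \<eta> w \<le> \<gamma> * ((1 - t) * \<eta> c + t * \<eta> \<beta>)"
      using \<open>\<eta> w < _\<close> \<gamma> by simp
    moreover have "(1 - t) * (c - \<gamma> * \<eta> c) + t * (\<beta> - \<gamma> * \<eta> \<beta>)
       = ((1 - t) * c + t * \<beta>) - \<gamma> * ((1 - t) * \<eta> c + t * \<eta> \<beta>)"
      by (simp add: algebra_simps)
    ultimately show ?thesis using wt by linarith
  qed
  finally show ?thesis using m by simp
qed


theorem proposition1:
  fixes P yH yL u \<gamma> \<beta> a wH wL bH bL :: real
    and C C' C'' \<eta> \<eta>' \<eta>'' :: "real \<Rightarrow> real"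
  assumes P: "P > 0"
    and y: "yH > yL" "yL \<ge> 0"
    and \<gamma>: "0 < \<gamma>" "\<gamma> \<le> 1"
    and C0: "C 0 = 0"
    and C_incr: "strict_mono_on {0..<1} C"
    and C_conv: "strictly_convex_on {0..<1} C"
    and C_d1: "\<And>x. x \<in> {0..<1} \<Longrightarrow> (C has_real_derivative C' x) (at x within {0..<1})"
    and C_d2: "\<And>x. x \<in> {0..<1} \<Longrightarrow> (C' has_real_derivative C'' x) (at x within {0..<1})"
    and C_lim: "filterlim C at_top (at_left 1)"
    and \<eta>0: "\<eta> 0 = 0"
    and \<eta>_incr: "strict_mono_on {0..} \<eta>"
    and \<eta>_conv: "strictly_convex_on {0..} \<eta>"
    and \<eta>_d1: "\<And>x. x \<ge> 0 \<Longrightarrow> (\<eta> has_real_derivative \<eta>' x) (at x within {0..})"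
    and \<eta>_d2: "\<And>x. x \<ge> 0 \<Longrightarrow> (\<eta>' has_real_derivative \<eta>'' x) (at x within {0..})"
    and \<beta>: "\<beta> \<ge> 0" "\<gamma> * \<eta>' \<beta> = 1"
    and a: "a \<in> {0..<1}"
    and opt: "optimal_at P yH yL \<gamma> \<eta> C u a wH wL bH bL"
  shows "(\<forall>bH' bL'. 0 \<le> bH' \<and> bH' \<le> wH \<and> 0 \<le> bL' \<and> bL' \<le> wL \<longrightarrow>
            profit P yH yL \<gamma> \<eta> a wH wL bH' bL'
              \<le> profit P yH yL \<gamma> \<eta> a wH wL (min \<beta> wH) (min \<beta> wL))
       \<and> (0 < a \<longrightarrow>
          (\<forall>bH' bL'. 0 \<le> bH' \<and> bH' \<le> wH \<and> 0 \<le> bL' \<and> bL' \<le> wL \<and>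
             profit P yH yL \<gamma> \<eta> a wH wL bH' bL'
               = profit P yH yL \<gamma> \<eta> a wH wL (min \<beta> wH) (min \<beta> wL)
             \<longrightarrow> bH' = min \<beta> wH \<and> bL' = min \<beta> wL))"
proof -
  have w: "wH \<ge> 0" "wL \<ge> 0" using opt unfolding optimal_at_def feasible_at_def by auto
  define g where "g c = c - \<gamma> * \<eta> c" for c
  have gle: "g c \<le> g (min \<beta> w)" if "0 \<le> c" "c \<le> w" for c w
    using gmin[OF \<eta>_conv \<eta>_d1 \<gamma>(1) \<beta>, of c w] that unfolding g_def by fastforce
  have glt: "g c < g (min \<beta> w)" if "0 \<le> c" "c \<le> w" "c \<noteq> min \<beta> w" for c w
    using gmin[OF \<eta>_conv \<eta>_d1 \<gamma>(1) \<beta>, of c w] that unfolding g_def by fastforce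
  have pr: "profit P yH yL \<gamma> \<eta> a wH wL x z = a * (P * yH - wH + g x) + (1 - a) * (P * yL - wL + g z)" for x z
    unfolding profit_def g_def by (simp add: algebra_simps)
  have a0: "0 \<le> a" "0 < 1 - a" using a by auto
  show ?thesis
  proof (intro conjI allI impI)
    fix bH' bL' assume h: "0 \<le> bH' \<and> bH' \<le> wH \<and> 0 \<le> bL' \<and> bL' \<le> wL"
    have "a * g bH' \<le> a * g (min \<beta> wH)" using gle h a0 by (intro mult_left_mono) auto
    moreover have "(1 - a) * g bL' \<le> (1 - a) * g (min \<beta> wL)" using gle h a0 by (intro mult_left_mono) auto
    ultimately show "profit P yH yL \<gamma> \<eta> a wH wL bH' bL' \<le> profit P yH yL \<gamma> \<eta> a wH wL (min \<beta> wH) (min \<beta> wL)"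
      unfolding pr by (simp add: algebra_simps)
  next
    fix bH' bL' assume ap: "0 < a" and h: "0 \<le> bH' \<and> bH' \<le> wH \<and> 0 \<le> bL' \<and> bL' \<le> wL \<and>
             profit P yH yL \<gamma> \<eta> a wH wL bH' bL' = profit P yH yL \<gamma> \<eta> a wH wL (min \<beta> wH) (min \<beta> wL)"
    have e: "a * g bH' + (1 - a) * g bL' = a * g (min \<beta> wH) + (1 - a) * g (min \<beta> wL)"
      using h unfolding pr by (simp add: algebra_simps)
    have A: "a * g bH' \<le> a * g (min \<beta> wH)" using gle h a0 by (intro mult_left_mono) auto
    have B: "(1 - a) * g bL' \<le> (1 - a) * g (min \<beta> wL)" using gle h a0 by (intro mult_left_mono) auto
    show "bH' = min \<beta> wH"
    proof (rule ccontr)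
      assume "bH' \<noteq> min \<beta> wH"
      then have "a * g bH' < a * g (min \<beta> wH)" using glt h ap by (intro mult_strict_left_mono) auto
      then show False using e B by linarith
    qed
    show "bL' = min \<beta> wL"
    proof (rule ccontr)
      assume "bL' \<noteq> min \<beta> wL"
      then have "(1 - a) * g bL' < (1 - a) * g (min \<beta> wL)" using glt h a0 by (intro mult_strict_left_mono) auto
      then show False using e A by linarith
    qed
  qed
qed

end
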